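(* Let $P$ be the unit-volume right prism over an equilateral triangle that is circumscribed about a sphere (i.e. all five faces are tangent to a common sphere), and let $Q$ be any unit-volume quadrilateral pyramid. Then the surface area of $P$ is strictly less than the surface area of $Q$.
   Context: A right prism over a triangle has two parallel congruent triangular faces related by a translation perpendicular to their planes, and three rectangular side faces. *)

theory Defs
  imports "HOL-Analysis.Analysis"
begin

(* Area of a planar polygon given by its vertices in cyclic order
   (shoelace / vector-area formula): half the norm of sum of v_i x v_(i+1). *)
definition polygon_area :: "(real^3) list \<Rightarrow> real" where
  "polygon_area vs = norm (\<Sum>i<length vs. cross3 (vs ! i) (vs ! ((i + 1) mod length vs))) / 2"

definition surface_area :: "(real^3) list list \<Rightarrow> real" where
  "surface_area fs = (\<Sum>f\<leftarrow>fs. polygon_area f)"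

definition solid_volume :: "(real^3) set \<Rightarrow> real" where
  "solid_volume S = measure lborel S"

definition circumscribed_about_sphere :: "(real^3) set \<Rightarrow> (real^3) list list \<Rightarrow> bool" where
  "circumscribed_about_sphere P fs \<longleftrightarrow>
     (\<exists>c r. r > 0 \<and> cball c r \<subseteq> P \<and>
        (\<forall>f\<in>set fs. sphere c r \<inter> convex hull (set f) \<noteq> {}))"

definition prism_vertices :: "real \<Rightarrow> real \<Rightarrow> (real^3) list \<times> (real^3) list" where
  "prism_vertices a h =
     ([vector [0, 0, 0], vector [a, 0, 0], vector [a / 2, a * sqrt 3 / 2, 0]],
      [vector [0, 0, h], vector [a, 0, h], vector [a / 2, a * sqrt 3 / 2, h]])"

definition prism_faces :: "real \<Rightarrow> real \<Rightarrow> (real^3) list list" where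
  "prism_faces a h =
     (let (B, T) = prism_vertices a h in
       [B, T,
        [B!0, B!1, T!1, T!0], [B!1, B!2, T!2, T!1], [B!2, B!0, T!0, T!2]])"

definition prism_solid :: "real \<Rightarrow> real \<Rightarrow> (real^3) set" where
  "prism_solid a h = convex hull (set (fst (prism_vertices a h)) \<union> set (snd (prism_vertices a h)))"

(* Quadrilateral pyramid with apex p over the base v0 v1 v2 v3 (in cyclic order):
   base is a planar convex quadrilateral (coplanar, affinely 2-dimensional,
   diagonals cross), apex not in the base plane. *)
definition quad_pyramid :: "real^3 \<Rightarrow> real^3 \<Rightarrow> real^3 \<Rightarrow> real^3 \<Rightarrow> real^3 \<Rightarrow> bool" where
  "quad_pyramid p v0 v1 v2 v3 \<longleftrightarrow>
     aff_dim {v0, v1, v2, v3} = 2 \<and>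
     open_segment v0 v2 \<inter> open_segment v1 v3 \<noteq> {} \<and>
     p \<notin> affine hull {v0, v1, v2, v3}"

definition pyramid_faces :: "real^3 \<Rightarrow> real^3 \<Rightarrow> real^3 \<Rightarrow> real^3 \<Rightarrow> real^3 \<Rightarrow> (real^3) list list" where
  "pyramid_faces p v0 v1 v2 v3 =
     [[v0, v1, v2, v3], [p, v0, v1], [p, v1, v2], [p, v2, v3], [p, v3, v0]]"

definition pyramid_solid :: "real^3 \<Rightarrow> real^3 \<Rightarrow> real^3 \<Rightarrow> real^3 \<Rightarrow> real^3 \<Rightarrow> (real^3) set" where
  "pyramid_solid p v0 v1 v2 v3 = convex hull {p, v0, v1, v2, v3}"

end

theory Submission
  imports Defs
begin

lemma cross3_vec: "cross3 (vector [a,b,c]) (vector [d,e,f]) = (vector [b*f - c*e, c*d - a*f, a*e - b*d] :: real^3)"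
  by (simp add: cross3_def vec_eq_iff forall_3 vector_3)

lemma add_vec3: "(vector [a,b,c] :: real^3) + vector [d,e,f] = vector [a+d, b+e, c+f]"
  by (simp add: vec_eq_iff forall_3 vector_3)

lemma norm_vec3: "norm (vector [a,b,c] :: real^3) = sqrt (a^2 + b^2 + c^2)"
  by (simp add: norm_eq_sqrt_inner inner_vec_def sum_3 vector_3 power2_eq_square)

lemma norm_vec3_eq: "v \<ge> 0 \<Longrightarrow> a^2 + b^2 + c^2 = v^2 \<Longrightarrow> norm (vector [a,b,c] :: real^3) = v"
  by (simp add: norm_vec3)

lemma sum3: "(\<Sum>i<(3::nat). g i) = g 0 + g 1 + g 2" for g :: "nat \<Rightarrow> real^3"
  by (simp add: eval_nat_numeral)

lemma sum4: "(\<Sum>i<(4::nat). g i) = g 0 + g 1 + g 2 + g 3" for g :: "nat \<Rightarrow> real^3"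
  by (simp add: eval_nat_numeral)

lemma polygon_area3: "polygon_area [A,B,C] = norm (cross3 A B + cross3 B C + cross3 C A) / 2"
  unfolding polygon_area_def by (simp only: list.size sum3) simp

lemma polygon_area4: "polygon_area [A,B,C,D] = norm (cross3 A B + cross3 B C + cross3 C D + cross3 D A) / 2"
  unfolding polygon_area_def by (simp only: list.size sum4) simp

lemma prism_surface:
  assumes "a > 0" "h > 0"
  shows "surface_area (prism_faces a h) = sqrt 3 / 2 * a^2 + 3 * a * h"
proof -
  have s3: "sqrt 3 ^ 2 = 3" by simp
  define r where "r = sqrt 3"
  have r2: "r^2 = 3" "r > 0" unfolding r_def by auto
  define P0 :: "real^3" where "P0 = vector [0,0,0]"
  define P1 :: "real^3" where "P1 = vector [a,0,0]"
  define P2 :: "real^3" where "P2 = vector [a/2, a*r/2, 0]"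
  define Q0 :: "real^3" where "Q0 = vector [0,0,h]"
  define Q1 :: "real^3" where "Q1 = vector [a,0,h]"
  define Q2 :: "real^3" where "Q2 = vector [a/2, a*r/2, h]"
  have pf: "prism_faces a h = [[P0,P1,P2],[Q0,Q1,Q2],[P0,P1,Q1,Q0],[P1,P2,Q2,Q1],[P2,P0,Q0,Q2]]"
    by (simp add: prism_faces_def prism_vertices_def P0_def P1_def P2_def Q0_def Q1_def Q2_def r_def)
  have e1: "cross3 P0 P1 + cross3 P1 P2 + cross3 P2 P0 = vector [0, 0, a*a*r/2]"
    unfolding P0_def P1_def P2_def by (simp add: cross3_vec add_vec3 mult.assoc)
  have e2: "cross3 Q0 Q1 + cross3 Q1 Q2 + cross3 Q2 Q0 = vector [0, 0, a*a*r/2]"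
    unfolding Q0_def Q1_def Q2_def by (simp add: cross3_vec add_vec3 algebra_simps)
  have e3: "cross3 P0 P1 + cross3 P1 Q1 + cross3 Q1 Q0 + cross3 Q0 P0 = vector [0, -2*a*h, 0]"
    unfolding P0_def P1_def Q0_def Q1_def by (simp add: cross3_vec add_vec3 algebra_simps)
  have e4: "cross3 P1 P2 + cross3 P2 Q2 + cross3 Q2 Q1 + cross3 Q1 P1 = vector [a*h*r, a*h, 0]"
    unfolding P1_def P2_def Q1_def Q2_def by (simp add: cross3_vec add_vec3 algebra_simps)
  have e5: "cross3 P2 P0 + cross3 P0 Q0 + cross3 Q0 Q2 + cross3 Q2 P2 = vector [-a*h*r, a*h, 0]"
    unfolding P0_def P2_def Q0_def Q2_def by (simp add: cross3_vec add_vec3 algebra_simps)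
  have n1: "norm (vector [0, 0, a*a*r/2] :: real^3) = a*a*r/2"
    using assms r2 by (intro norm_vec3_eq) (simp_all add: power_mult_distrib)
  have n3: "norm (vector [0, -2*a*h, 0] :: real^3) = 2*a*h"
    using assms r2 by (intro norm_vec3_eq) (simp_all add: power_mult_distrib)
  have n4: "norm (vector [a*h*r, a*h, 0] :: real^3) = 2*a*h"
  proof (rule norm_vec3_eq)
    have "(a*h*r)^2 = 3*(a*h)^2" using r2 by (simp add: power_mult_distrib)
    then show "(a*h*r)^2 + (a*h)^2 + 0^2 = (2*a*h)^2" by (simp add: power_mult_distrib)
  qed (use assms in auto)
  have n5: "norm (vector [-a*h*r, a*h, 0] :: real^3) = 2*a*h"
  proof (rule norm_vec3_eq)
    have "(-a*h*r)^2 = 3*(a*h)^2" using r2 by (simp add: power_mult_distrib)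
    then show "(-a*h*r)^2 + (a*h)^2 + 0^2 = (2*a*h)^2" by (simp add: power_mult_distrib)
  qed (use assms in auto)
  have a1: "polygon_area [P0,P1,P2] = a*a*r/4" unfolding polygon_area3 e1 n1 by simp
  have a2: "polygon_area [Q0,Q1,Q2] = a*a*r/4" unfolding polygon_area3 e2 n1 by simp
  have a3: "polygon_area [P0,P1,Q1,Q0] = a*h" unfolding polygon_area4 e3 n3 by simp
  have a4: "polygon_area [P1,P2,Q2,Q1] = a*h" unfolding polygon_area4 e4 n4 by simp
  have a5: "polygon_area [P2,P0,Q0,Q2] = a*h" unfolding polygon_area4 e5 n5 by simp
  have "surface_area (prism_faces a h) = polygon_area [P0,P1,P2] + polygon_area [Q0,Q1,Q2] + polygon_area [P0,P1,Q1,Q0] + polygon_area [P1,P2,Q2,Q1] + polygon_area [P2,P0,Q0,Q2]"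
    unfolding pf surface_area_def by simp
  also have "\<dots> = sqrt 3 / 2 * a^2 + 3 * a * h" unfolding a1 a2 a3 a4 a5 r_def by (simp add: power2_eq_square)
  finally show ?thesis .
qed

lemma face_touch:
  fixes c w :: "real^3"
  assumes "cball c r \<subseteq> convex hull V" "\<forall>v\<in>V. w \<bullet> v \<le> b" "norm w = 1"
    "sphere c r \<inter> convex hull F \<noteq> {}" "\<forall>v\<in>F. w \<bullet> v = b" "r > 0"
  shows "w \<bullet> c = b - r"
proof -
  have hs: "convex hull V \<subseteq> {x. w \<bullet> x \<le> b}"
    using assms(2) by (intro hull_minimal) (auto intro: convex_halfspace_le)
  have hp: "convex hull F \<subseteq> {x. w \<bullet> x = b}"
    using assms(5) by (intro hull_minimal) (auto intro: convex_hyperplane)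
  have "c + r *\<^sub>R w \<in> cball c r" using assms(3,6) by (simp add: dist_norm)
  hence "w \<bullet> (c + r *\<^sub>R w) \<le> b" using assms(1) hs by blast
  moreover have "w \<bullet> w = 1" using assms(3) by (simp add: norm_eq_1)
  ultimately have le: "w \<bullet> c + r \<le> b" by (simp add: inner_add_right)
  obtain y where y: "y \<in> sphere c r" "y \<in> convex hull F" using assms(4) by blast
  have "w \<bullet> y = b" using y hp by blast
  have "w \<bullet> (y - c) \<le> norm w * norm (y - c)" by (rule norm_cauchy_schwarz)
  also have "norm (y - c) = r" using y by (simp add: dist_norm norm_minus_commute)
  finally have "b - w \<bullet> c \<le> r" using \<open>w \<bullet> y = b\<close> assms(3) by (simp add: inner_diff_right)
  with le show ?thesis by linarith
qed

lemma inner_vec3: "(vector [a,b,c] :: real^3) \<bullet> vector [d,e,f] = a*d + b*e + c*f"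
  by (simp add: inner_vec_def sum_3 vector_3)

lemma prism_insphere:
  assumes "a > 0" "h > 0" "circumscribed_about_sphere (prism_solid a h) (prism_faces a h)"
  shows "h = a * sqrt 3 / 3"
proof -
  define sq where "sq = sqrt 3"
  have s2: "sq * sq = 3" "sq > 0" unfolding sq_def by auto
  define P0 :: "real^3" where "P0 = vector [0,0,0]"
  define P1 :: "real^3" where "P1 = vector [a,0,0]"
  define P2 :: "real^3" where "P2 = vector [a/2, a* sq/2, 0]"
  define Q0 :: "real^3" where "Q0 = vector [0,0,h]"
  define Q1 :: "real^3" where "Q1 = vector [a,0,h]"
  define Q2 :: "real^3" where "Q2 = vector [a/2, a* sq/2, h]"
  note defs = P0_def P1_def P2_def Q0_def Q1_def Q2_def
  have pf: "prism_faces a h = [[P0,P1,P2],[Q0,Q1,Q2],[P0,P1,Q1,Q0],[P1,P2,Q2,Q1],[P2,P0,Q0,Q2]]"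
    by (simp add: prism_faces_def prism_vertices_def defs sq_def)
  have ps: "prism_solid a h = convex hull {P0,P1,P2,Q0,Q1,Q2}"
    by (simp add: prism_solid_def prism_vertices_def defs sq_def insert_commute)
  obtain c r where cr: "r > 0" "cball c r \<subseteq> convex hull {P0,P1,P2,Q0,Q1,Q2}"
    "\<forall>f\<in>set (prism_faces a h). sphere c r \<inter> convex hull (set f) \<noteq> {}"
    using assms(3) unfolding circumscribed_about_sphere_def ps by blast
  have t: "sphere c r \<inter> convex hull {P0,P1,P2} \<noteq> {}" "sphere c r \<inter> convex hull {Q0,Q1,Q2} \<noteq> {}"
     "sphere c r \<inter> convex hull {P0,P1,Q1,Q0} \<noteq> {}" "sphere c r \<inter> convex hull {P1,P2,Q2,Q1} \<noteq> {}"
     "sphere c r \<inter> convex hull {P2,P0,Q0,Q2} \<noteq> {}"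
    using cr(3) unfolding pf by auto
  have e1: "vector [0,0,-1] \<bullet> c = 0 - r"
    apply (rule face_touch[OF cr(2) _ _ t(1) _ cr(1)])
    using assms s2 by (auto simp: defs inner_vec3 norm_vec3)
  have e2: "vector [0,0,1] \<bullet> c = h - r"
    apply (rule face_touch[OF cr(2) _ _ t(2) _ cr(1)])
    using assms s2 by (auto simp: defs inner_vec3 norm_vec3)
  have e3: "vector [0,-1,0] \<bullet> c = 0 - r"
    apply (rule face_touch[OF cr(2) _ _ t(3) _ cr(1)])
    using assms s2 by (auto simp: defs inner_vec3 norm_vec3)
  have n: "norm (vector [sq/2, 1/2, 0] :: real^3) = 1" "norm (vector [-sq/2, 1/2, 0] :: real^3) = 1"
    using s2 by (auto simp: norm_vec3 power2_eq_square)
  have e4: "vector [sq/2,1/2,0] \<bullet> c = a* sq/2 - r"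
    apply (rule face_touch[OF cr(2) _ n(1) t(4) _ cr(1)])
    using assms s2 by (auto simp: defs inner_vec3 algebra_simps)
  have e5: "vector [-sq/2,1/2,0] \<bullet> c = 0 - r"
    apply (rule face_touch[OF cr(2) _ n(2) t(5) _ cr(1)])
    using assms s2 by (auto simp: defs inner_vec3 algebra_simps)
  have c: "c = vector [c$1, c$2, c$3]" by (simp add: vec_eq_iff forall_3 vector_3)
  have "c$3 = r" "c$3 = h - r" "c$2 = r" "sq/2 * c$1 + c$2/2 = a* sq/2 - r" "-sq/2 * c$1 + c$2/2 = - r"
    using e1 e2 e3 e4 e5 by (subst (asm) (1 2 3 4 5) c, simp add: inner_vec3)+
  hence "h = 2 * r" "r = a * sq / 6" by linarith+
  thus ?thesis unfolding sq_def by simp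
qed

lemma content_tetra:
  fixes A B C D :: "real ^ 3"
  shows "measure lborel (convex hull {A, B, C, D}) =
           \<bar>(cross3 (B - A) (C - A)) \<bullet> (D - A)\<bar> / 6"
proof -
  define M :: "real ^ 3 ^ 3" where "M \<equiv> (\<chi> i. \<chi> j. (if j = 1 then B else if j = 2 then C else D) $ i - A $ i)"
  define g where "g = (\<lambda>x. M *v x)"
  define std where "std = (convex hull insert 0 Basis :: (real ^ 3) set)"
  have [simp]: "M *v axis i 1 = (if i = 1 then B - A else if i = 2 then C - A else D - A)" for i
    by (auto simp: M_def matrix_vector_mult_basis column_def vec_eq_iff)
  have compact: "compact std" unfolding std_def
    by (intro finite_imp_compact_convex_hull) auto
  have "measure lebesgue (convex hull {A, B, C, D}) =
          measure lebesgue (((+) (-A)) ` (convex hull {A, B, C, D}))"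
    by (rule measure_translation [symmetric])
  also have "((+) (-A)) ` (convex hull {A, B, C, D}) = convex hull (((+) (-A)) ` {A, B, C, D})"
    by (rule convex_hull_translation [symmetric])
  also have "((+) (-A)) ` {A, B, C, D} = {0, B - A, C - A, D - A}"
    by (auto simp: image_iff)
  finally have eq: "measure lebesgue (convex hull {A, B, C, D}) =
                      measure lebesgue (convex hull {0, B - A, C - A, D - A})" .
  from compact have "measure lebesgue (g ` std) = \<bar>det M\<bar> * measure lebesgue std"
    by (subst measure_lebesgue_linear_transformation)
       (auto intro: finite_imp_bounded_convex_hull dest: compact_imp_closed simp: g_def std_def)
  also have "measure lebesgue std = measure lborel std" using compact
    by (intro measure_completion) (auto dest: compact_imp_closed)
  also have "measure lborel std = 1 / 6" unfolding std_def
    by (simp add: content_std_simplex fact_numeral)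
  also have "g ` std = convex hull (g ` insert 0 Basis)" unfolding std_def
    by (rule convex_hull_linear_image) (auto simp: g_def)
  also have "g ` insert 0 Basis = insert 0 (g ` Basis)"
    by (auto simp: g_def)
  also have "g ` Basis = {B - A, C - A, D - A}"
  proof -
    have "(Basis :: (real^3) set) = (\<lambda>i. axis i 1) ` (UNIV::3 set)" by (auto simp: Basis_vec_def Basis_real_def)
    also have "\<dots> = {axis 1 1, axis 2 1, axis 3 1}" by (simp add: UNIV_3)
    finally have BB: "(Basis :: (real^3) set) = {axis 1 1, axis 2 1, axis 3 1}" .
    show ?thesis unfolding BB by (simp add: g_def)
  qed
  also note eq [symmetric]
  finally have "measure lebesgue (convex hull {A, B, C, D}) = \<bar>det M\<bar> / 6" by simp
  moreover have "det M = (cross3 (B - A) (C - A)) \<bullet> (D - A)"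
    by (simp add: det_3 M_def cross3_def inner_vec_def sum_3 algebra_simps)
  moreover have "measure lebesgue (convex hull {A, B, C, D}) = measure lborel (convex hull {A, B, C, D})"
    using finite_imp_compact_convex_hull[of "{A, B, C, D}"]
    by (intro measure_completion) (auto dest: compact_imp_closed)
  ultimately show ?thesis by simp
qed

lemma diff_vec3: "(vector [a,b,c] :: real^3) - vector [d,e,f] = vector [a-d, b-e, c-f]"
  by (simp add: vec_eq_iff forall_3 vector_3)

lemma ml_compact: "compact S \<Longrightarrow> measure lebesgue S = measure lborel S"
  by (intro measure_completion) (auto dest: compact_imp_closed)

lemma hull_halfspace_le: "\<forall>v\<in>V. w \<bullet> v \<le> b \<Longrightarrow> convex hull V \<subseteq> {x. w \<bullet> x \<le> b}"
  by (intro hull_minimal) (auto intro: convex_halfspace_le)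

lemma hull_halfspace_ge: "\<forall>v\<in>V. w \<bullet> v \<ge> b \<Longrightarrow> convex hull V \<subseteq> {x. w \<bullet> x \<ge> b}"
  by (intro hull_minimal) (auto intro: convex_halfspace_ge)

lemma neg_sep: "S \<subseteq> {x. w \<bullet> x \<le> b} \<Longrightarrow> T \<subseteq> {x. w \<bullet> x \<ge> b} \<Longrightarrow> b \<noteq> 0 \<Longrightarrow> negligible (S \<inter> T)"
  by (rule negligible_subset[OF negligible_hyperplane[of w b]]) (auto intro: order_antisym)

lemma prism_volume:
  assumes "a > 0" "h > 0"
  shows "solid_volume (prism_solid a h) \<ge> sqrt 3 / 4 * a^2 * h"
proof -
  define sq where "sq = sqrt 3"
  have s2: "sq * sq = 3" "sq > 0" unfolding sq_def by auto
  define P0 :: "real^3" where "P0 = vector [0,0,0]"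
  define P1 :: "real^3" where "P1 = vector [a,0,0]"
  define P2 :: "real^3" where "P2 = vector [a/2, a * sq/2, 0]"
  define Q0 :: "real^3" where "Q0 = vector [0,0,h]"
  define Q1 :: "real^3" where "Q1 = vector [a,0,h]"
  define Q2 :: "real^3" where "Q2 = vector [a/2, a * sq/2, h]"
  note defs = P0_def P1_def P2_def Q0_def Q1_def Q2_def
  have ps: "prism_solid a h = convex hull {P0,P1,P2,Q0,Q1,Q2}"
    by (simp add: prism_solid_def prism_vertices_def defs sq_def insert_commute)
  define T1 where "T1 = convex hull {P0,P1,P2,Q0}"
  define T2 where "T2 = convex hull {P1,P2,Q0,Q1}"
  define T3 where "T3 = convex hull {P2,Q0,Q1,Q2}"
  have cpt: "compact T1" "compact T2" "compact T3" "compact (prism_solid a h)"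
    unfolding T1_def T2_def T3_def ps by (auto intro!: finite_imp_compact_convex_hull)
  have sub: "T1 \<union> T2 \<union> T3 \<subseteq> prism_solid a h"
    unfolding T1_def T2_def T3_def ps by (auto intro!: hull_mono dest: set_mp[OF hull_mono, rotated])
  define n :: "real^3" where "n = vector [h * sq, h, a * sq]"
  define n' :: "real^3" where "n' = vector [0, 2*h, a * sq]"
  have d0: "a * h * sq \<noteq> 0" using assms s2 by simp
  have h1: "T1 \<subseteq> {x. n \<bullet> x \<le> a * h * sq}" unfolding T1_def
    by (rule hull_halfspace_le) (use assms s2 in \<open>auto simp: defs n_def inner_vec3 algebra_simps\<close>)
  have h23: "T2 \<union> T3 \<subseteq> {x. n \<bullet> x \<ge> a * h * sq}" unfolding T2_def T3_def Un_subset_iff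
    by (intro conjI hull_halfspace_ge) (use assms s2 in \<open>auto simp: defs n_def inner_vec3 algebra_simps\<close>)
  have h2: "T2 \<subseteq> {x. n' \<bullet> x \<le> a * h * sq}" unfolding T2_def
    by (rule hull_halfspace_le) (use assms s2 in \<open>auto simp: defs n'_def inner_vec3 algebra_simps\<close>)
  have h3: "T3 \<subseteq> {x. n' \<bullet> x \<ge> a * h * sq}" unfolding T3_def
    by (rule hull_halfspace_ge) (use assms s2 in \<open>auto simp: defs n'_def inner_vec3 algebra_simps\<close>)
  have "measure lebesgue (T1 \<union> T2 \<union> T3) = measure lebesgue T1 + measure lebesgue T2 + measure lebesgue T3"
  proof (rule measure_Un3_negligible)
    show "T1 \<in> lmeasurable" "T2 \<in> lmeasurable" "T3 \<in> lmeasurable" using cpt by (auto intro: lmeasurable_compact)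
    show "negligible (T1 \<inter> T2)" using neg_sep[OF h1 _ d0] h23 by blast
    show "negligible (T1 \<inter> T3)" using neg_sep[OF h1 _ d0] h23 by blast
    show "negligible (T2 \<inter> T3)" using neg_sep[OF h2 h3 d0] .
  qed simp
  also have "measure lebesgue T1 = a*a* sq*h/12" unfolding ml_compact[OF cpt(1)]
    using assms s2 by (simp add: T1_def content_tetra defs cross3_vec diff_vec3 inner_vec3)
  also have "measure lebesgue T2 = a*a* sq*h/12" unfolding ml_compact[OF cpt(2)]
    using assms s2 by (simp add: T2_def content_tetra defs cross3_vec diff_vec3 inner_vec3 algebra_simps)
  also have "measure lebesgue T3 = a*a* sq*h/12" unfolding ml_compact[OF cpt(3)]
    using assms s2 by (simp add: T3_def content_tetra defs cross3_vec diff_vec3 inner_vec3 algebra_simps)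
  finally have eq: "measure lebesgue (T1 \<union> T2 \<union> T3) = a*a* sq*h/4" by simp
  have "measure lebesgue (T1 \<union> T2 \<union> T3) \<le> measure lebesgue (prism_solid a h)"
    by (rule measure_mono_fmeasurable[OF sub]) (use cpt in \<open>auto intro!: fmeasurableD lmeasurable_compact compact_Un\<close>)
  hence "a*a* sq*h/4 \<le> measure lebesgue (prism_solid a h)" using eq by simp
  moreover have "sqrt 3 / 4 * a^2 * h = a*a* sq*h/4" by (simp add: sq_def power2_eq_square)
  ultimately have "sqrt 3 / 4 * a^2 * h \<le> measure lebesgue (prism_solid a h)" by linarith
  thus ?thesis unfolding solid_volume_def using ml_compact[OF cpt(4)] by linarith
qed

lemma cross_triple: "cross3 x (cross3 y z) = (x \<bullet> z) *\<^sub>R y - (x \<bullet> y) *\<^sub>R z"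
  by (simp add: cross3_def inner_vec_def sum_3 vec_eq_iff forall_3 vector_3 algebra_simps)

lemma cross_tri: "cross3 p a + cross3 a b + cross3 b p = cross3 (a - p) (b - p)"
  by (simp add: cross3_def inner_vec_def sum_3 vec_eq_iff forall_3 vector_3 algebra_simps)

lemma cross_diffs: "cross3 (a - q) (b - q) = cross3 a b + cross3 q a - cross3 q b"
  by (simp add: cross3_def inner_vec_def sum_3 vec_eq_iff forall_3 vector_3 algebra_simps)

lemma tri_area: "polygon_area [p, a, b] = norm (cross3 (a - p) (b - p)) / 2"
  by (simp only: polygon_area3 cross_tri)

lemma norm_cross_le: "norm (cross3 x y) \<le> norm x * norm y"
proof -
  have "0 \<le> (x \<bullet> y)^2" by simp
  hence "(norm (cross3 x y))^2 \<le> (norm x * norm y)^2" using norm_cross_dot[of x y] by linarith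
  thus ?thesis by (rule power2_le_imp_le) simp
qed

lemma lat_face:
  fixes w a b q :: "real^3"
  assumes "w \<bullet> a = 0" "w \<bullet> b = 0"
  shows "norm w * norm (cross3 (a - q) (b - q)) =
         sqrt ((w \<bullet> cross3 (a - q) (b - q))^2 + (\<bar>w \<bullet> q\<bar> * norm (a - b))^2)"
proof -
  have "cross3 w (cross3 (a - q) (b - q)) = - (w \<bullet> q) *\<^sub>R (a - b)"
  proof -
    have lin: "cross3 w (x + y - z) = cross3 w x + cross3 w y - cross3 w z" for x y z
      by (simp add: cross3_def vec_eq_iff forall_3 vector_3 algebra_simps)
    show ?thesis unfolding cross_diffs lin cross_triple using assms
      by (simp add: inner_commute scaleR_diff_right)
  qed
  hence "norm (cross3 w (cross3 (a - q) (b - q))) = \<bar>w \<bullet> q\<bar> * norm (a - b)" by simp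
  moreover note norm_cross_dot[of w "cross3 (a - q) (b - q)"]
  ultimately have "(norm w * norm (cross3 (a - q) (b - q)))^2 = (w \<bullet> cross3 (a - q) (b - q))^2 + (\<bar>w \<bullet> q\<bar> * norm (a - b))^2"
    by (simp add: add.commute)
  thus ?thesis by (intro real_sqrt_unique[symmetric]) auto
qed

lemma mink4:
  "sqrt ((a1+a2+a3+a4)^2 + (b1+b2+b3+b4)^2) \<le> sqrt (a1^2+b1^2) + sqrt (a2^2+b2^2) + sqrt (a3^2+b3^2) + sqrt (a4^2+b4^2)"
proof -
  have "sqrt ((a1+a2+a3+a4)^2 + (b1+b2+b3+b4)^2) \<le> sqrt ((a1+a2+a3)^2 + (b1+b2+b3)^2) + sqrt (a4^2+b4^2)"
    by (rule real_sqrt_sum_squares_triangle_ineq)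
  moreover have "sqrt ((a1+a2+a3)^2 + (b1+b2+b3)^2) \<le> sqrt ((a1+a2)^2 + (b1+b2)^2) + sqrt (a3^2+b3^2)"
    by (rule real_sqrt_sum_squares_triangle_ineq)
  moreover have "sqrt ((a1+a2)^2 + (b1+b2)^2) \<le> sqrt (a1^2 + b1^2) + sqrt (a2^2+b2^2)"
    by (rule real_sqrt_sum_squares_triangle_ineq)
  ultimately show ?thesis by linarith
qed

lemma I1: "cross3 (z0+X) (z0+Y) + cross3 (z0+Y) (z0 - t*\<^sub>R X) + cross3 (z0 - t*\<^sub>R X) (z0 - s*\<^sub>R Y) + cross3 (z0 - s*\<^sub>R Y) (z0 + X)
   = ((1+t)*(1+s)) *\<^sub>R cross3 X Y"
  by (simp add: cross3_def inner_vec_def sum_3 vec_eq_iff forall_3 vector_3 algebra_simps)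

lemma sumF: "cross3 (X - q) (Y - q) + cross3 (Y - q) (-(t*\<^sub>R X) - q) + cross3 (-(t*\<^sub>R X) - q) (-(s*\<^sub>R Y) - q) + cross3 (-(s*\<^sub>R Y) - q) (X - q)
   = ((1+t)*(1+s)) *\<^sub>R cross3 X Y"
  by (simp add: cross3_def inner_vec_def sum_3 vec_eq_iff forall_3 vector_3 algebra_simps)

lemma iso_ids:
  "cross3 (Y - X) (-(t*\<^sub>R X) - Y) = (1+t) *\<^sub>R cross3 X Y"
  "cross3 (-(t*\<^sub>R X) - Y) (-(s*\<^sub>R Y) - -(t*\<^sub>R X)) = (t*(1+s)) *\<^sub>R cross3 X Y"
  "cross3 (-(s*\<^sub>R Y) - -(t*\<^sub>R X)) (X - -(s*\<^sub>R Y)) = (s*(1+t)) *\<^sub>R cross3 X Y"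
  "cross3 (X - -(s*\<^sub>R Y)) (Y - X) = (1+s) *\<^sub>R cross3 X Y"
  by (simp_all add: cross3_def inner_vec_def sum_3 vec_eq_iff forall_3 vector_3 algebra_simps)

lemma amgm4: "(l0::real) \<ge> 0 \<Longrightarrow> l1 \<ge> 0 \<Longrightarrow> l2 \<ge> 0 \<Longrightarrow> l3 \<ge> 0 \<Longrightarrow> (l0+l2)*(l1+l3) \<le> (l0+l1+l2+l3)^2/4"
proof -
  have e: "(l0+l1+l2+l3)^2 - 4*((l0+l2)*(l1+l3)) = (l0+l2-(l1+l3))^2"
    by (simp add: power2_eq_square algebra_simps)
  have "0 \<le> (l0+l2-(l1+l3))^2" by simp
  hence "4*((l0+l2)*(l1+l3)) \<le> (l0+l1+l2+l3)^2" using e by linarith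
  thus ?thesis by simp
qed

lemma pyr_ineq:
  fixes z0 X Y q :: "real^3" and t s :: real
  assumes t: "t > 0" and s: "s > 0" and vol: "6 \<le> (1+t)*(1+s)*\<bar>cross3 X Y \<bullet> q\<bar>"
  shows "\<exists>B H. B > 0 \<and> H > 0 \<and> 3 \<le> B*H \<and>
    B + sqrt (B^2 + 4*B*H^2) \<le> surface_area (pyramid_faces (z0+q) (z0+X) (z0+Y) (z0 - t *\<^sub>R X) (z0 - s *\<^sub>R Y))"
proof -
  define w where "w = cross3 X Y"
  define a0 where "a0 = X"
  define a1 where "a1 = Y"
  define a2 where "a2 = -(t *\<^sub>R X)"
  define a3 where "a3 = -(s *\<^sub>R Y)"
  define F0 where "F0 = cross3 (a0 - q) (a1 - q)"
  define F1 where "F1 = cross3 (a1 - q) (a2 - q)"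
  define F2 where "F2 = cross3 (a2 - q) (a3 - q)"
  define F3 where "F3 = cross3 (a3 - q) (a0 - q)"
  define k where "k = (1+t)*(1+s)"
  define W where "W = norm w"
  define \<eta> where "\<eta> = \<bar>w \<bullet> q\<bar>"
  define l0 where "l0 = norm (a0 - a1)"
  define l1 where "l1 = norm (a1 - a2)"
  define l2 where "l2 = norm (a2 - a3)"
  define l3 where "l3 = norm (a3 - a0)"
  define L where "L = l0 + l1 + l2 + l3"
  have kpos: "k > 0" using t s by (simp add: k_def)
  have surf: "surface_area (pyramid_faces (z0+q) (z0+X) (z0+Y) (z0 - t *\<^sub>R X) (z0 - s *\<^sub>R Y))
      = k * W / 2 + (norm F0 + norm F1 + norm F2 + norm F3) / 2"
  proof -
    have d: "(z0+X) - (z0+q) = a0 - q" "(z0+Y) - (z0+q) = a1 - q"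
      "(z0 - t *\<^sub>R X) - (z0+q) = a2 - q" "(z0 - s *\<^sub>R Y) - (z0+q) = a3 - q"
      by (simp_all add: a0_def a1_def a2_def a3_def algebra_simps)
    have b: "polygon_area [z0+X, z0+Y, z0 - t *\<^sub>R X, z0 - s *\<^sub>R Y] = k * W / 2"
      unfolding polygon_area4 I1 using kpos by (simp add: k_def W_def w_def)
    have f0: "polygon_area [z0+q, z0+X, z0+Y] = norm F0 / 2" by (simp only: tri_area d F0_def)
    have f1: "polygon_area [z0+q, z0+Y, z0 - t *\<^sub>R X] = norm F1 / 2" by (simp only: tri_area d F1_def)
    have f2: "polygon_area [z0+q, z0 - t *\<^sub>R X, z0 - s *\<^sub>R Y] = norm F2 / 2" by (simp only: tri_area d F2_def)
    have f3: "polygon_area [z0+q, z0 - s *\<^sub>R Y, z0+X] = norm F3 / 2" by (simp only: tri_area d F3_def)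
    show ?thesis unfolding pyramid_faces_def surface_area_def
      by (simp only: list.map sum_list.Cons sum_list.Nil b f0 f1 f2 f3) simp
  qed
  have wa: "w \<bullet> a0 = 0" "w \<bullet> a1 = 0" "w \<bullet> a2 = 0" "w \<bullet> a3 = 0"
    by (simp_all add: w_def a0_def a1_def a2_def a3_def dot_cross_self inner_commute)
  have lf: "W * norm F0 = sqrt ((w \<bullet> F0)^2 + (\<eta> * l0)^2)"
           "W * norm F1 = sqrt ((w \<bullet> F1)^2 + (\<eta> * l1)^2)"
           "W * norm F2 = sqrt ((w \<bullet> F2)^2 + (\<eta> * l2)^2)"
           "W * norm F3 = sqrt ((w \<bullet> F3)^2 + (\<eta> * l3)^2)"
    unfolding W_def F0_def F1_def F2_def F3_def \<eta>_def l0_def l1_def l2_def l3_def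
    by (rule lat_face; fact wa)+
  have sF: "F0 + F1 + F2 + F3 = k *\<^sub>R w"
    unfolding F0_def F1_def F2_def F3_def a0_def a1_def a2_def a3_def k_def w_def by (rule sumF)
  have sw: "w \<bullet> F0 + w \<bullet> F1 + w \<bullet> F2 + w \<bullet> F3 = k * W^2"
  proof -
    have "w \<bullet> F0 + w \<bullet> F1 + w \<bullet> F2 + w \<bullet> F3 = w \<bullet> (F0 + F1 + F2 + F3)" by (simp add: inner_add_right)
    also have "\<dots> = k * W^2" unfolding sF W_def by (simp add: power2_norm_eq_inner)
    finally show ?thesis .
  qed
  have mk: "sqrt ((k * W^2)^2 + (\<eta> * L)^2) \<le> W * (norm F0 + norm F1 + norm F2 + norm F3)"
  proof -
    have "sqrt ((k * W^2)^2 + (\<eta> * L)^2) = sqrt ((w \<bullet> F0 + w \<bullet> F1 + w \<bullet> F2 + w \<bullet> F3)^2 + (\<eta>*l0 + \<eta>*l1 + \<eta>*l2 + \<eta>*l3)^2)"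
      unfolding sw L_def by (simp add: distrib_left)
    also have "\<dots> \<le> W * norm F0 + W * norm F1 + W * norm F2 + W * norm F3"
      unfolding lf by (rule mink4)
    finally show ?thesis by (simp add: distrib_left)
  qed
  have lpos: "l0 \<ge> 0" "l1 \<ge> 0" "l2 \<ge> 0" "l3 \<ge> 0" by (simp_all add: l0_def l1_def l2_def l3_def)
  have iso: "2 * (k * W) \<le> L^2 / 4"
  proof -
    have c1: "(1+t) * W \<le> l0 * l1"
    proof -
      have "norm (cross3 (a1 - a0) (a2 - a1)) \<le> norm (a1 - a0) * norm (a2 - a1)" by (rule norm_cross_le)
      moreover have "cross3 (a1 - a0) (a2 - a1) = (1+t) *\<^sub>R w" unfolding a0_def a1_def a2_def w_def by (rule iso_ids)
      ultimately show ?thesis using t by (simp add: W_def l0_def l1_def norm_minus_commute)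
    qed
    have c2: "(t*(1+s)) * W \<le> l1 * l2"
    proof -
      have "norm (cross3 (a2 - a1) (a3 - a2)) \<le> norm (a2 - a1) * norm (a3 - a2)" by (rule norm_cross_le)
      moreover have "cross3 (a2 - a1) (a3 - a2) = (t*(1+s)) *\<^sub>R w" unfolding a1_def a2_def a3_def w_def by (rule iso_ids)
      ultimately show ?thesis using t s by (simp add: W_def l1_def l2_def norm_minus_commute)
    qed
    have c3: "(s*(1+t)) * W \<le> l2 * l3"
    proof -
      have "norm (cross3 (a3 - a2) (a0 - a3)) \<le> norm (a3 - a2) * norm (a0 - a3)" by (rule norm_cross_le)
      moreover have "cross3 (a3 - a2) (a0 - a3) = (s*(1+t)) *\<^sub>R w" unfolding a0_def a2_def a3_def w_def by (rule iso_ids)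
      ultimately show ?thesis using t s by (simp add: W_def l2_def l3_def norm_minus_commute)
    qed
    have c4: "(1+s) * W \<le> l3 * l0"
    proof -
      have "norm (cross3 (a0 - a3) (a1 - a0)) \<le> norm (a0 - a3) * norm (a1 - a0)" by (rule norm_cross_le)
      moreover have "cross3 (a0 - a3) (a1 - a0) = (1+s) *\<^sub>R w" unfolding a0_def a1_def a3_def w_def by (rule iso_ids)
      ultimately show ?thesis using s by (simp add: W_def l3_def l0_def norm_minus_commute)
    qed
    have "2 * (k * W) \<le> (l0+l2)*(l1+l3)"
      using c1 c2 c3 c4 unfolding k_def by (simp add: algebra_simps)
    also have "\<dots> \<le> L^2/4" unfolding L_def using lpos by (rule amgm4)
    finally show ?thesis .
  qed
  have etapos: "\<eta> > 0"
  proof (rule ccontr)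
    assume "\<not> \<eta> > 0" hence "\<eta> = 0" by (simp add: \<eta>_def)
    thus False using vol by (simp add: \<eta>_def w_def)
  qed
  have Wpos: "W > 0"
  proof (rule ccontr)
    assume "\<not> W > 0" hence "w = 0" by (simp add: W_def)
    thus False using etapos by (simp add: \<eta>_def)
  qed
  define B where "B = k * W / 2"
  define H where "H = \<eta> / W"
  have Bpos: "B > 0" using kpos Wpos by (simp add: B_def)
  have Hpos: "H > 0" using etapos Wpos by (simp add: H_def)
  have BH: "3 \<le> B * H"
  proof -
    have "B * H = k * \<eta> / 2" using Wpos by (simp add: B_def H_def field_simps)
    moreover have "6 \<le> k * \<eta>" using vol by (simp add: k_def \<eta>_def w_def)
    ultimately show ?thesis by simp
  qed
  have key: "sqrt (B^2 + 4*B*H^2) \<le> sqrt ((k * W^2)^2 + (\<eta> * L)^2) / (2 * W)"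
  proof -
    have "4*B*H^2 = 2*(k*W) * \<eta>^2 / W^2" using Wpos by (simp add: B_def H_def field_simps power2_eq_square)
    also have "\<dots> \<le> (L^2/4) * \<eta>^2 / W^2"
      using iso Wpos by (intro divide_right_mono mult_right_mono) auto
    finally have "B^2 + 4*B*H^2 \<le> ((k * W^2)^2 + (\<eta> * L)^2) / (2 * W)^2"
      using Wpos by (simp add: B_def field_simps power2_eq_square)
    hence "sqrt (B^2 + 4*B*H^2) \<le> sqrt (((k * W^2)^2 + (\<eta> * L)^2) / (2 * W)^2)"
      by (rule real_sqrt_le_mono)
    also have "\<dots> = sqrt ((k * W^2)^2 + (\<eta> * L)^2) / (2 * W)"
    proof -
      have "sqrt ((2*W)^2) = 2*W" using Wpos by (intro real_sqrt_unique) auto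
      thus ?thesis by (simp only: real_sqrt_divide)
    qed
    finally show ?thesis .
  qed
  have "sqrt ((k * W^2)^2 + (\<eta> * L)^2) / (2 * W) \<le> (norm F0 + norm F1 + norm F2 + norm F3) / 2"
    using mk Wpos by (simp add: divide_le_eq field_simps)
  hence "B + sqrt (B^2 + 4*B*H^2) \<le> surface_area (pyramid_faces (z0+q) (z0+X) (z0+Y) (z0 - t *\<^sub>R X) (z0 - s *\<^sub>R Y))"
    unfolding surf B_def[symmetric] using key by linarith
  thus ?thesis using Bpos Hpos BH by blast
qed

lemma det_T1: "cross3 ((z0+X) - (z0+q)) ((z0+Y) - (z0+q)) \<bullet> ((z0 - t*\<^sub>R X) - (z0+q)) = - (1+t) * (cross3 X Y \<bullet> q)"
  by (simp add: cross3_def inner_vec_def sum_3 vec_eq_iff forall_3 vector_3 algebra_simps)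

lemma det_T2: "cross3 ((z0+X) - (z0+q)) ((z0 - t*\<^sub>R X) - (z0+q)) \<bullet> ((z0 - s*\<^sub>R Y) - (z0+q)) = - s*(1+t) * (cross3 X Y \<bullet> q)"
  by (simp add: cross3_def inner_vec_def sum_3 vec_eq_iff forall_3 vector_3 algebra_simps)

lemma in_hull4:
  fixes A B C D :: "'a::real_vector"
  assumes "\<alpha> \<ge> 0" "\<beta> \<ge> 0" "\<gamma> \<ge> 0" "\<delta> \<ge> 0" "\<alpha> + \<beta> + \<gamma> + \<delta> = 1"
  shows "\<alpha> *\<^sub>R A + \<beta> *\<^sub>R B + \<gamma> *\<^sub>R C + \<delta> *\<^sub>R D \<in> convex hull {A,B,C,D}"
proof -
  have "(\<Sum>i\<in>{0,1,2,3::nat}. ([\<alpha>,\<beta>,\<gamma>,\<delta>]!i) *\<^sub>R ([A,B,C,D]!i)) \<in> convex hull {A,B,C,D}"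
    by (rule convex_sum) (use assms in \<open>auto intro: hull_inc\<close>)
  thus ?thesis by (simp add: add.assoc)
qed

lemma pyr_setup:
  assumes "quad_pyramid p v0 v1 v2 v3"
  shows "\<exists>z0 X Y q t s. t > 0 \<and> s > 0 \<and> p = z0 + q \<and> v0 = z0 + X \<and> v1 = z0 + Y \<and>
     v2 = z0 - t *\<^sub>R X \<and> v3 = z0 - s *\<^sub>R Y"
proof -
  obtain z0 where z: "z0 \<in> open_segment v0 v2" "z0 \<in> open_segment v1 v3"
    using assms unfolding quad_pyramid_def by blast
  obtain u where u: "0 < u" "u < 1" "z0 = (1 - u) *\<^sub>R v0 + u *\<^sub>R v2" using z(1) by (auto simp: in_segment)
  obtain u' where u': "0 < u'" "u' < 1" "z0 = (1 - u') *\<^sub>R v1 + u' *\<^sub>R v3" using z(2) by (auto simp: in_segment)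
  define t where "t = (1 - u) / u"
  define s where "s = (1 - u') / u'"
  have "v2 = z0 - t *\<^sub>R (v0 - z0)"
    using u unfolding t_def by (simp add: vec_eq_iff field_simps)
  moreover have "v3 = z0 - s *\<^sub>R (v1 - z0)"
    using u' unfolding s_def by (simp add: vec_eq_iff field_simps)
  moreover have "t > 0" "s > 0" using u u' by (auto simp: t_def s_def)
  ultimately show ?thesis
    by (intro exI[of _ z0] exI[of _ "v0 - z0"] exI[of _ "v1 - z0"] exI[of _ "p - z0"] exI[of _ t] exI[of _ s]) auto
qed

lemma pyr_vol:
  fixes z0 X Y q :: "real^3"
  assumes t: "t > 0" and s: "s > 0"
  shows "measure lborel (convex hull {z0+q, z0+X, z0+Y, z0 - t *\<^sub>R X, z0 - s *\<^sub>R Y})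
     \<le> (1+t)*(1+s)*\<bar>cross3 X Y \<bullet> q\<bar> / 6"
proof -
  define P where "P = z0+q"
  define V0 where "V0 = z0+X"
  define V1 where "V1 = z0+Y"
  define V2 where "V2 = z0 - t *\<^sub>R X"
  define V3 where "V3 = z0 - s *\<^sub>R Y"
  have ne: "1 + t \<noteq> 0" "s \<noteq> 0" "s * (1+t) \<noteq> 0" using t s by auto
  define T1 where "T1 = convex hull {P,V0,V1,V2}"
  define T2 where "T2 = convex hull {P,V0,V2,V3}"
  define C where "C = {x. \<exists>a b0 b1 b2 b3. a \<ge> 0 \<and> b0 \<ge> 0 \<and> b1 \<ge> 0 \<and> b2 \<ge> 0 \<and> b3 \<ge> 0 \<and>
       a + b0 + b1 + b2 + b3 = 1 \<and> x = a *\<^sub>R P + b0 *\<^sub>R V0 + b1 *\<^sub>R V1 + b2 *\<^sub>R V2 + b3 *\<^sub>R V3}"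
  have "convex C"
    unfolding convex_def
  proof (intro allI impI ballI)
    fix x y and u v :: real
    assume "x \<in> C" "y \<in> C" and uv: "0 \<le> u" "0 \<le> v" "u + v = 1"
    then obtain a b0 b1 b2 b3 a' c0 c1 c2 c3 where
      x: "a \<ge> 0" "b0 \<ge> 0" "b1 \<ge> 0" "b2 \<ge> 0" "b3 \<ge> 0" "a + b0 + b1 + b2 + b3 = 1"
         "x = a *\<^sub>R P + b0 *\<^sub>R V0 + b1 *\<^sub>R V1 + b2 *\<^sub>R V2 + b3 *\<^sub>R V3" and
      y: "a' \<ge> 0" "c0 \<ge> 0" "c1 \<ge> 0" "c2 \<ge> 0" "c3 \<ge> 0" "a' + c0 + c1 + c2 + c3 = 1"
         "y = a' *\<^sub>R P + c0 *\<^sub>R V0 + c1 *\<^sub>R V1 + c2 *\<^sub>R V2 + c3 *\<^sub>R V3"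
      unfolding C_def by blast
    show "u *\<^sub>R x + v *\<^sub>R y \<in> C" unfolding C_def
    proof (intro CollectI exI conjI)
      show "u *\<^sub>R x + v *\<^sub>R y = (u*a + v * a') *\<^sub>R P + (u*b0 + v * c0) *\<^sub>R V0 + (u*b1 + v * c1) *\<^sub>R V1
          + (u*b2 + v * c2) *\<^sub>R V2 + (u*b3 + v * c3) *\<^sub>R V3"
        unfolding x(7) y(7) by (simp add: algebra_simps)
      have "u*a + v * a' + (u*b0 + v * c0) + (u*b1 + v * c1) + (u*b2 + v * c2) + (u*b3 + v * c3)
          = u * (a + b0 + b1 + b2 + b3) + v * (a' + c0 + c1 + c2 + c3)" by (simp add: algebra_simps)
      thus "u*a + v * a' + (u*b0 + v * c0) + (u*b1 + v * c1) + (u*b2 + v * c2) + (u*b3 + v * c3) = 1"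
        using x(6) y(6) uv(3) by simp
    qed (use x y uv in auto)
  qed
  moreover have "{P,V0,V1,V2,V3} \<subseteq> C"
  proof -
    have "P \<in> C" unfolding C_def by (rule CollectI, rule exI[of _ 1], rule exI[of _ 0], rule exI[of _ 0], rule exI[of _ 0], rule exI[of _ 0]) simp
    moreover have "V0 \<in> C" unfolding C_def by (rule CollectI, rule exI[of _ 0], rule exI[of _ 1], rule exI[of _ 0], rule exI[of _ 0], rule exI[of _ 0]) simp
    moreover have "V1 \<in> C" unfolding C_def by (rule CollectI, rule exI[of _ 0], rule exI[of _ 0], rule exI[of _ 1], rule exI[of _ 0], rule exI[of _ 0]) simp
    moreover have "V2 \<in> C" unfolding C_def by (rule CollectI, rule exI[of _ 0], rule exI[of _ 0], rule exI[of _ 0], rule exI[of _ 1], rule exI[of _ 0]) simp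
    moreover have "V3 \<in> C" unfolding C_def by (rule CollectI, rule exI[of _ 0], rule exI[of _ 0], rule exI[of _ 0], rule exI[of _ 0], rule exI[of _ 1]) simp
    ultimately show ?thesis by blast
  qed
  ultimately have hC: "convex hull {P,V0,V1,V2,V3} \<subseteq> C" by (intro hull_minimal)
  have CT: "C \<subseteq> T1 \<union> T2"
  proof
    fix x assume "x \<in> C"
    then obtain a b0 b1 b2 b3 where
      x: "a \<ge> 0" "b0 \<ge> 0" "b1 \<ge> 0" "b2 \<ge> 0" "b3 \<ge> 0" "a + b0 + b1 + b2 + b3 = 1"
         "x = a *\<^sub>R P + b0 *\<^sub>R V0 + b1 *\<^sub>R V1 + b2 *\<^sub>R V2 + b3 *\<^sub>R V3"
      unfolding C_def by blast
    define r where "r = 1 / (1+t)"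
    define r' where "r' = 1 / (s * (1+t))"
    have r: "r * (1+t) = 1" "r > 0" using t by (auto simp: r_def)
    have r': "r' * (s * (1+t)) = 1" "r' > 0" using t s by (auto simp: r'_def)
    show "x \<in> T1 \<union> T2"
    proof (cases "b1 \<ge> s * b3")
      case True
      have "x = a *\<^sub>R P + (b0 + b3*(1+s)*t*r) *\<^sub>R V0 + (b1 - s*b3) *\<^sub>R V1 + (b2 + b3*(1+s)*r) *\<^sub>R V2"
        unfolding x(7) P_def V0_def V1_def V2_def V3_def using r(1)
        by (simp add: vec_eq_iff forall_3 algebra_simps; algebra)
      also have "\<dots> \<in> T1" unfolding T1_def
      proof (rule in_hull4)
        show "0 \<le> b0 + b3*(1+s)*t*r" "0 \<le> b2 + b3*(1+s)*r" using x t s r by auto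
        show "0 \<le> b1 - s*b3" using True by simp
        show "a + (b0 + b3*(1+s)*t*r) + (b1 - s*b3) + (b2 + b3*(1+s)*r) = 1"
        proof -
          show ?thesis using x(6) r(1) by algebra
        qed
      qed (use x in auto)
      finally show ?thesis by blast
    next
      case False
      have "x = a *\<^sub>R P + (b0 + b1*(1+s)*t*r') *\<^sub>R V0 + (b2 + b1*(1+s)*r') *\<^sub>R V2 + (b3 - b1*(1+t)*r') *\<^sub>R V3"
        unfolding x(7) P_def V0_def V1_def V2_def V3_def using r'(1)
        by (simp add: vec_eq_iff forall_3 algebra_simps; algebra)
      also have "\<dots> \<in> T2" unfolding T2_def
      proof (rule in_hull4)
        show "0 \<le> b0 + b1*(1+s)*t*r'" "0 \<le> b2 + b1*(1+s)*r'" using x t s r' by auto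
        have "b1*(1+t)*r' = b1 / s" using t s by (simp add: r'_def)
        moreover have "b1 / s \<le> b3" using False s by (simp add: divide_le_eq mult.commute)
        ultimately show "0 \<le> b3 - b1*(1+t)*r'" by simp
        show "a + (b0 + b1*(1+s)*t*r') + (b2 + b1*(1+s)*r') + (b3 - b1*(1+t)*r') = 1"
        proof -
          show ?thesis using x(6) r'(1) by algebra
        qed
      qed (use x in auto)
      finally show ?thesis by blast
    qed
  qed
  have cpt: "compact T1" "compact T2" "compact (convex hull {P,V0,V1,V2,V3})"
    unfolding T1_def T2_def by (auto intro!: finite_imp_compact_convex_hull)
  have "measure lborel (convex hull {P,V0,V1,V2,V3}) \<le> measure lborel (T1 \<union> T2)"
    by (rule measure_mono_fmeasurable) (use hC CT cpt in \<open>auto intro!: fmeasurable_compact borel_closed compact_imp_closed compact_Un\<close>)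
  also have "\<dots> \<le> measure lborel T1 + measure lborel T2"
    by (rule measure_Un_le) (use cpt in \<open>auto intro!: borel_closed compact_imp_closed\<close>)
  also have "measure lborel T1 = (1+t) * \<bar>cross3 X Y \<bullet> q\<bar> / 6"
    unfolding T1_def content_tetra P_def V0_def V1_def V2_def det_T1 using t by (simp add: abs_mult)
  also have "measure lborel T2 = s*(1+t) * \<bar>cross3 X Y \<bullet> q\<bar> / 6"
    unfolding T2_def content_tetra P_def V0_def V2_def V3_def det_T2 using t s by (simp add: abs_mult)
  finally have le: "measure lborel (convex hull {P,V0,V1,V2,V3}) \<le> (1+t) * \<bar>cross3 X Y \<bullet> q\<bar> / 6 + s*(1+t) * \<bar>cross3 X Y \<bullet> q\<bar> / 6" .
  have "(1+t) * \<bar>cross3 X Y \<bullet> q\<bar> / 6 + s*(1+t) * \<bar>cross3 X Y \<bullet> q\<bar> / 6 = (1+t)*(1+s)*\<bar>cross3 X Y \<bullet> q\<bar> / 6"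
    by (simp add: algebra_simps add_divide_distrib)
  with le show ?thesis unfolding P_def V0_def V1_def V2_def V3_def by linarith
qed

lemma final_num:
  fixes a B H :: real
  assumes a: "a > 0" "a^3 \<le> 4" and B: "B > 0" and H: "H > 0" and BH: "3 \<le> B*H"
  shows "3 * sqrt 3 / 2 * a^2 < B + sqrt (B^2 + 4*B*H^2)"
proof (rule ccontr)
  define sq where "sq = sqrt 3"
  have sq: "sq * sq = 3" "sq > 0" unfolding sq_def by auto
  have sqlt: "sq < 16/9"
  proof -
    have "sqrt 3 < sqrt ((16/9)^2)" by (subst real_sqrt_less_iff) (simp add: power2_eq_square)
    thus ?thesis unfolding sq_def by simp
  qed
  define K where "K = 3 * sq / 2 * a^2"
  assume "\<not> 3 * sqrt 3 / 2 * a^2 < B + sqrt (B^2 + 4*B*H^2)"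
  hence le: "sqrt (B^2 + 4*B*H^2) \<le> K - B" unfolding K_def sq_def by linarith
  have nn: "0 \<le> B^2 + 4*B*H^2" using B by (intro add_nonneg_nonneg) auto
  have s0: "0 \<le> sqrt (B^2 + 4*B*H^2)" using nn by simp
  have "(sqrt (B^2 + 4*B*H^2))^2 \<le> (K - B)^2" using le s0 by (rule power_mono)
  moreover have "(sqrt (B^2 + 4*B*H^2))^2 = B^2 + 4*B*H^2"
  proof -
    have "0 \<le> B^2 + 4*B*H^2" using B by (intro add_nonneg_nonneg) auto
    thus ?thesis by simp
  qed
  ultimately have "4*B*H^2 \<le> K^2 - 2*K*B" by (simp add: power2_eq_square algebra_simps)
  hence "B * (4*B*H^2) \<le> B * (K^2 - 2*K*B)" using B by (intro mult_left_mono) auto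
  hence 1: "4*(B*H)^2 \<le> K^2*B - 2*K*B^2" by (simp add: power2_eq_square algebra_simps)
  have Kpos: "K > 0" using a sq by (simp add: K_def)
  have "0 \<le> 2*K*(B - K/4)^2" using Kpos by simp
  hence 2: "K^2*B - 2*K*B^2 \<le> K^3/8" by (simp add: power2_eq_square power3_eq_cube algebra_simps)
  have "3^2 \<le> (B*H)^2" using BH by (intro power_mono) auto
  hence "288 \<le> K^3" using 1 2 by simp
  moreover have "K^3 = 81 * sq / 8 * (a^3)^2"
  proof -
    have "K^3 = 27/8 * (sq * sq) * sq * (a^3)^2" unfolding K_def by (simp add: power3_eq_cube power2_eq_square algebra_simps)
    thus ?thesis using sq by simp
  qed
  moreover have "(a^3)^2 \<le> 4^2" using a by (intro power_mono) auto
  hence "81 * sq / 8 * (a^3)^2 \<le> 81 * sq / 8 * 4^2" using sq by (intro mult_left_mono) auto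
  ultimately have "288 \<le> 81 * sq / 8 * 16" by simp
  thus False using sqlt by simp
qed

theorem proposition5p7:
  fixes a h :: real and p v0 v1 v2 v3 :: "real^3"
  assumes "a > 0" and "h > 0"
    and "solid_volume (prism_solid a h) = 1"
    and "circumscribed_about_sphere (prism_solid a h) (prism_faces a h)"
    and "quad_pyramid p v0 v1 v2 v3"
    and "solid_volume (pyramid_solid p v0 v1 v2 v3) = 1"
  shows "surface_area (prism_faces a h) < surface_area (pyramid_faces p v0 v1 v2 v3)"
proof -
  have hh: "h = a * sqrt 3 / 3" using prism_insphere assms(1,2,4) by blast
  have "sqrt 3 / 4 * a^2 * h \<le> 1" using prism_volume[OF assms(1,2)] assms(3) by simp
  moreover have "sqrt 3 / 4 * a^2 * h = a^3 / 4" unfolding hh by (simp add: power2_eq_square power3_eq_cube)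
  ultimately have a3: "a^3 \<le> 4" by simp
  have SP: "surface_area (prism_faces a h) = 3 * sqrt 3 / 2 * a^2"
  proof -
    have "sqrt 3 / 2 * a^2 + 3 * a * h = 3 * sqrt 3 / 2 * a^2" unfolding hh by (simp add: power2_eq_square algebra_simps)
    thus ?thesis using prism_surface[OF assms(1,2)] by simp
  qed
  obtain z0 X Y q t s where rep: "t > 0" "s > 0" "p = z0 + q" "v0 = z0 + X" "v1 = z0 + Y"
     "v2 = z0 - t *\<^sub>R X" "v3 = z0 - s *\<^sub>R Y"
    using pyr_setup[OF assms(5)] by blast
  have "1 \<le> (1+t)*(1+s)*\<bar>cross3 X Y \<bullet> q\<bar> / 6"
    using pyr_vol[OF rep(1,2), of z0 q X Y] assms(6)
    unfolding solid_volume_def pyramid_solid_def rep by simp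
  hence "6 \<le> (1+t)*(1+s)*\<bar>cross3 X Y \<bullet> q\<bar>" by simp
  from pyr_ineq[OF rep(1,2) this, of z0] obtain B H where
    BH: "B > 0" "H > 0" "3 \<le> B*H"
      "B + sqrt (B^2 + 4*B*H^2) \<le> surface_area (pyramid_faces (z0+q) (z0+X) (z0+Y) (z0 - t *\<^sub>R X) (z0 - s *\<^sub>R Y))"
    by blast
  have "3 * sqrt 3 / 2 * a^2 < B + sqrt (B^2 + 4*B*H^2)"
    by (rule final_num) (use assms(1) a3 BH in auto)
  with BH(4) show ?thesis unfolding SP rep by linarith
qed

end
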